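(* Let $K=2$ and suppose that for every horizon $T$ (a multiple of $100$) a valid pair $(\eta,\gamma)=(\eta_T,\gamma_T)$ in the non-trivial regime is chosen. Then there exists $T_0$ such that for all $T\ge T_0$, WSU-UX run on the two-phase loss sequence satisfies $\mathbb{E}[\pi_{t,1}]\le \frac{1}{KT}$ for every round $t$ with $\frac{T_1}{2}\le t\le T_1$.
   Context: WSU-UX. Fix integers $K\ge 2$ and $T\ge 1$ and hyperparameters $\eta,\gamma$. The pair $(\eta,\gamma)$ is called valid if $\eta,\gamma\in(0,1/2)$ and $\eta K/\gamma\le 1/2$. Given a fixed loss sequence $\ell_t\in[0,1]^K$, WSU-UX sets $\pi_{1,i}=1/K$ and in each round $t$: forms $\tilde\pi_{t,i}=(1-\gamma)\pi_{t,i}+\gamma/K$; draws $I_t$ with $\Pr(I_t=i\mid\mathcal F_{t-1})=\tilde\pi_{t,i}$; sets $\hat\ell_{t,i}=\ell_{t,i}\mathbf 1[I_t=i]/\tilde\pi_{t,i}$; and updates $\pi_{t+1,i}=\pi_{t,i}\bigl(1-\eta(\hat\ell_{t,i}-\sum_{j}\pi_{t,j}\hat\ell_{t,j})\bigr)$; $\mathcal F_t$ is the history generated by $I_1,\dots,I_t$. Non-trivial regime: $\eta\ge T^{-2/3}$ and $\gamma\le T^{-1/3}$. Two-phase loss sequence ($K=2$, $T$ a multiple of $100$, $T_1=T/100$): $\ell_{t,1}=1,\ell_{t,2}=0$ for $1\le t\le T_1$ and $\ell_{t,1}=0,\ell_{t,2}=1$ for $T_1<t\le T$. *)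

theory Defs
  imports Complex_Main
begin

text \<open>Arms are indexed 1..K. A history of the first t-1 draws is stored as a list
  with the most recent draw first: [I_(t-1), ..., I_1]. The loss sequence is
  ell t i (round t >= 1, arm i).\<close>

fun wsu_pi :: "nat \<Rightarrow> real \<Rightarrow> real \<Rightarrow> (nat \<Rightarrow> nat \<Rightarrow> real) \<Rightarrow> nat list \<Rightarrow> nat \<Rightarrow> real" where
  "wsu_pi K eta gamma ell [] i = 1 / real K"
| "wsu_pi K eta gamma ell (I # h) i =
     (let p = wsu_pi K eta gamma ell h;
          t = length h + 1;
          pt = (\<lambda>j. (1 - gamma) * p j + gamma / real K);
          lhat = (\<lambda>j. if j = I then ell t j / pt j else 0)
      in p i * (1 - eta * (lhat i - (\<Sum>j\<in>{1..K}. p j * lhat j))))"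

definition wsu_pit :: "nat \<Rightarrow> real \<Rightarrow> real \<Rightarrow> (nat \<Rightarrow> nat \<Rightarrow> real) \<Rightarrow> nat list \<Rightarrow> nat \<Rightarrow> real" where
  "wsu_pit K eta gamma ell h i = (1 - gamma) * wsu_pi K eta gamma ell h i + gamma / real K"

fun hist_prob :: "nat \<Rightarrow> real \<Rightarrow> real \<Rightarrow> (nat \<Rightarrow> nat \<Rightarrow> real) \<Rightarrow> nat list \<Rightarrow> real" where
  "hist_prob K eta gamma ell [] = 1"
| "hist_prob K eta gamma ell (I # h) = hist_prob K eta gamma ell h * wsu_pit K eta gamma ell h I"

definition expected_pi :: "nat \<Rightarrow> real \<Rightarrow> real \<Rightarrow> (nat \<Rightarrow> nat \<Rightarrow> real) \<Rightarrow> nat \<Rightarrow> nat \<Rightarrow> real" where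
  "expected_pi K eta gamma ell t i =
     (\<Sum>h\<in>{h. length h = t - 1 \<and> set h \<subseteq> {1..K}}.
        hist_prob K eta gamma ell h * wsu_pi K eta gamma ell h i)"

definition valid_pair :: "nat \<Rightarrow> real \<Rightarrow> real \<Rightarrow> bool" where
  "valid_pair K eta gamma \<longleftrightarrow>
     0 < eta \<and> eta < 1/2 \<and> 0 < gamma \<and> gamma < 1/2 \<and> eta * real K / gamma \<le> 1/2"

definition nontrivial_regime :: "nat \<Rightarrow> real \<Rightarrow> real \<Rightarrow> bool" where
  "nontrivial_regime T eta gamma \<longleftrightarrow>
     eta \<ge> real T powr (-2/3) \<and> gamma \<le> real T powr (-1/3)"

definition two_phase_loss :: "nat \<Rightarrow> nat \<Rightarrow> nat \<Rightarrow> real" where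
  "two_phase_loss T t i =
     (if t \<le> T div 100 then (if i = 1 then 1 else 0) else (if i = 1 then 0 else 1))"

end

theory Submission imports Defs "HOL-Real_Asymp.Real_Asymp" begin

lemma sum12: "(\<Sum>j\<in>{1..2::nat}. f j) = f 1 + (f 2 :: real)"
proof -
  have "{1..2::nat} = {1,2}" by auto
  then show ?thesis by simp
qed

lemma P_cons1:
  "wsu_pi 2 e g ell (1 # h) i =
    wsu_pi 2 e g ell h i * (1 - e * ((if i = 1 then ell (length h + 1) 1 / ((1 - g) * wsu_pi 2 e g ell h 1 + g / 2) else 0)
       - wsu_pi 2 e g ell h 1 * (ell (length h + 1) 1 / ((1 - g) * wsu_pi 2 e g ell h 1 + g / 2))))"
  unfolding wsu_pi.simps Let_def sum12 by simp

lemma P_cons2: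
  "wsu_pi 2 e g ell (2 # h) i =
    wsu_pi 2 e g ell h i * (1 - e * ((if i = 2 then ell (length h + 1) 2 / ((1 - g) * wsu_pi 2 e g ell h 2 + g / 2) else 0)
       - wsu_pi 2 e g ell h 2 * (ell (length h + 1) 2 / ((1 - g) * wsu_pi 2 e g ell h 2 + g / 2))))"
  unfolding wsu_pi.simps Let_def sum12 by simp

lemma inv_phase1:
  fixes e g :: real
  assumes e: "0 < e" and g: "0 < g" "g < 1/2" and eg: "e * 2 / g \<le> 1/2"
  shows "set h \<subseteq> {1..2} \<Longrightarrow> length h \<le> T div 100 \<Longrightarrow>
    0 < wsu_pi 2 e g (two_phase_loss T) h 1 \<and> wsu_pi 2 e g (two_phase_loss T) h 1 \<le> 1/2 \<and>
    wsu_pi 2 e g (two_phase_loss T) h 1 + wsu_pi 2 e g (two_phase_loss T) h 2 = 1"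
proof (induction h)
  case Nil then show ?case by simp
next
  case (Cons I h)
  let ?P = "wsu_pi 2 e g (two_phase_loss T)"
  define p where "p = ?P h 1"
  define q where "q = ?P h 2"
  have IH: "0 < p" "p \<le> 1/2" "p + q = 1" using Cons by (auto simp: p_def q_def)
  have l1: "two_phase_loss T (length h + 1) 1 = 1" "two_phase_loss T (length h + 1) 2 = 0"
    using Cons.prems by (auto simp: two_phase_loss_def)
  define pt where "pt = (1 - g) * p + g / 2"
  have ptg: "pt \<ge> g/2" using IH g by (simp add: pt_def)
  have ptpos: "pt > 0" using ptg g by linarith
  have fr: "e * (1 - p) / pt \<le> 1/2"
  proof -
    have "e * (1 - p) / pt \<le> e / (g/2)"
      using IH e g ptg ptpos by (intro frac_le) auto
    also have "\<dots> = e * 2 / g" by simp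
    finally show ?thesis using eg by linarith
  qed
  have I: "I = 1 \<or> I = 2" using Cons.prems by auto
  show ?case
  proof (cases "I = 1")
    case True
    have a: "?P (I # h) 1 = p * (1 - e * (1 - p) / pt)"
      unfolding True P_cons1 l1 p_def[symmetric] pt_def[symmetric] using ptpos
      by (simp add: field_simps)
    have b: "?P (I # h) 2 = q * (1 + e * p / pt)"
      unfolding True P_cons1 l1 p_def[symmetric] q_def[symmetric] pt_def[symmetric] using ptpos
      by (simp add: field_simps)
    have c: "e * (1 - p) / pt \<ge> 0" using IH e ptpos by simp
    have "0 < 1 - e * (1 - p) / pt" using fr by linarith
    then have "0 < p * (1 - e * (1 - p) / pt)" using IH by simp
    moreover have "p * (1 - e * (1 - p) / pt) \<le> 1/2"
    proof -
      have "p * (1 - e * (1 - p) / pt) \<le> p * 1" using IH c by (intro mult_left_mono) auto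
      then show ?thesis using IH by linarith
    qed
    moreover have "p * (1 - e * (1 - p) / pt) + q * (1 + e * p / pt) = 1"
    proof -
      have "q = 1 - p" using IH by linarith
      then show ?thesis using ptpos unfolding \<open>q = 1 - p\<close> by (simp add: field_simps)
    qed
    ultimately show ?thesis using a b by simp
  next
    case False
    then have I2: "I = 2" using I by auto
    show ?thesis unfolding I2 P_cons2 l1 using IH by (simp add: p_def q_def)
  qed
qed

lemma hp_nonneg:
  fixes e g :: real
  assumes e: "0 < e" and g: "0 < g" "g < 1/2" and eg: "e * 2 / g \<le> 1/2"
  shows "set h \<subseteq> {1..2} \<Longrightarrow> length h \<le> T div 100 \<Longrightarrow>
    0 \<le> hist_prob 2 e g (two_phase_loss T) h"
proof (induction h)
  case Nil then show ?case by simp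
next
  case (Cons I h)
  have iv: "0 < wsu_pi 2 e g (two_phase_loss T) h 1 \<and> wsu_pi 2 e g (two_phase_loss T) h 1 \<le> 1/2 \<and>
    wsu_pi 2 e g (two_phase_loss T) h 1 + wsu_pi 2 e g (two_phase_loss T) h 2 = 1"
    using inv_phase1[OF assms, of h T] Cons.prems by auto
  have I: "I = 1 \<or> I = 2" using Cons.prems by auto
  have "0 \<le> wsu_pi 2 e g (two_phase_loss T) h I" using iv I by auto
  then have "0 \<le> wsu_pit 2 e g (two_phase_loss T) h I" using g unfolding wsu_pit_def by simp
  then show ?case using Cons by simp
qed

lemma H_suc_sum:
  "(\<Sum>h\<in>{h. length h = Suc n \<and> set h \<subseteq> {1..2::nat}}. f h) =
   (\<Sum>h\<in>{h. length h = n \<and> set h \<subseteq> {1..2::nat}}. (f (1 # h) + f (2 # h) :: real))"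
proof -
  let ?H = "{h. length h = n \<and> set h \<subseteq> {1..2::nat}}"
  have fin: "finite ?H" using finite_lists_length_eq[of "{1..2::nat}" n]
    by (simp add: conj_commute)
  have eq: "{h. length h = Suc n \<and> set h \<subseteq> {1..2::nat}} = (\<lambda>(I,h). I # h) ` ({1,2} \<times> ?H)"
  proof (rule set_eqI, rule iffI)
    fix x assume "x \<in> {h. length h = Suc n \<and> set h \<subseteq> {1..2::nat}}"
    then obtain I h where "x = I # h" "length h = n" "I \<in> {1,2}" "set h \<subseteq> {1..2}"
      by (cases x) (auto simp: le_Suc_eq numeral_2_eq_2)
    then show "x \<in> (\<lambda>(I,h). I # h) ` ({1,2} \<times> ?H)" by force
  qed force
  have inj: "inj_on (\<lambda>(I,h). I # h) ({1,2} \<times> ?H)" by (auto simp: inj_on_def)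
  have "(\<Sum>h\<in>{h. length h = Suc n \<and> set h \<subseteq> {1..2::nat}}. f h)
        = (\<Sum>x\<in>{1,2} \<times> ?H. f (fst x # snd x))"
    unfolding eq by (subst sum.reindex[OF inj]) (simp add: case_prod_beta)
  also have "\<dots> = (\<Sum>I\<in>{1,2::nat}. \<Sum>h\<in>?H. f (I # h))"
    unfolding sum.cartesian_product by (simp add: case_prod_beta)
  also have "\<dots> = (\<Sum>h\<in>?H. f (1 # h) + f (2 # h))"
    by (simp add: sum.distrib)
  finally show ?thesis .
qed

lemma step_ineq:
  fixes e g :: real
  assumes e: "0 < e" and g: "0 < g" "g < 1/2" and eg: "e * 2 / g \<le> 1/2"
  and h: "set h \<subseteq> {1..2}" "length h < T div 100"
  shows "hist_prob 2 e g (two_phase_loss T) (1 # h) * wsu_pi 2 e g (two_phase_loss T) (1 # h) 1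
       + hist_prob 2 e g (two_phase_loss T) (2 # h) * wsu_pi 2 e g (two_phase_loss T) (2 # h) 1
       \<le> (1 - e/2) * (hist_prob 2 e g (two_phase_loss T) h * wsu_pi 2 e g (two_phase_loss T) h 1)"
proof -
  let ?P = "wsu_pi 2 e g (two_phase_loss T)"
  define p where "p = ?P h 1"
  define q where "q = ?P h 2"
  define w where "w = hist_prob 2 e g (two_phase_loss T) h"
  have IH: "0 < p" "p \<le> 1/2" "p + q = 1" using inv_phase1[OF e g eg, of h T] h
    by (auto simp: p_def q_def)
  have w0: "0 \<le> w" using hp_nonneg[OF e g eg, of h T] h by (simp add: w_def)
  have l1: "two_phase_loss T (length h + 1) 1 = 1" "two_phase_loss T (length h + 1) 2 = 0"
    using h by (auto simp: two_phase_loss_def)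
  define pt where "pt = (1 - g) * p + g / 2"
  have ptpos: "pt > 0" using IH g by (simp add: pt_def add_pos_nonneg)
  have a: "?P (1 # h) 1 = p * (1 - e * (1 - p) / pt)"
    unfolding P_cons1 l1 p_def[symmetric] pt_def[symmetric] using ptpos
    by (simp add: field_simps)
  have b: "?P (2 # h) 1 = p"
    unfolding P_cons2 l1 p_def[symmetric] by simp
  have hp1: "hist_prob 2 e g (two_phase_loss T) (1 # h) = w * pt"
    by (simp add: w_def wsu_pit_def pt_def p_def)
  have hp2: "hist_prob 2 e g (two_phase_loss T) (2 # h) = w * ((1 - g) * q + g / 2)"
    by (simp add: w_def wsu_pit_def q_def)
  have "pt * (p * (1 - e * (1 - p) / pt)) + ((1 - g) * q + g / 2) * p = p - e * p * (1 - p)"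
  proof -
    have "q = 1 - p" using IH by linarith
    then show ?thesis using ptpos unfolding \<open>q = 1 - p\<close> pt_def by (simp add: field_simps)
  qed
  also have "\<dots> \<le> (1 - e/2) * p"
  proof -
    have "e * p * (1/2) \<le> e * p * (1 - p)" using IH e by (intro mult_left_mono) auto
    then show ?thesis by (simp add: algebra_simps)
  qed
  finally have "w * (pt * (p * (1 - e * (1 - p) / pt)) + ((1 - g) * q + g / 2) * p) \<le> w * ((1 - e/2) * p)"
    using w0 by (intro mult_left_mono) auto
  then show ?thesis unfolding a b hp1 hp2 by (simp add: algebra_simps p_def w_def)
qed

lemma S_bound:
  fixes e g :: real
  assumes e: "0 < e" and g: "0 < g" "g < 1/2" and eg: "e * 2 / g \<le> 1/2"
  shows "n \<le> T div 100 \<Longrightarrow> expected_pi 2 e g (two_phase_loss T) (Suc n) 1 \<le> (1/2) * (1 - e/2) ^ n"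
proof (induction n)
  case 0
  have "{h::nat list. length h = 0 \<and> set h \<subseteq> {1..2}} = {[]}" by auto
  then show ?case by (simp add: expected_pi_def)
next
  case (Suc n)
  let ?H = "{h. length h = n \<and> set h \<subseteq> {1..2::nat}}"
  have "expected_pi 2 e g (two_phase_loss T) (Suc (Suc n)) 1 =
     (\<Sum>h\<in>?H. hist_prob 2 e g (two_phase_loss T) (1 # h) * wsu_pi 2 e g (two_phase_loss T) (1 # h) 1
       + hist_prob 2 e g (two_phase_loss T) (2 # h) * wsu_pi 2 e g (two_phase_loss T) (2 # h) 1)"
    unfolding expected_pi_def by (simp only: diff_Suc_1 H_suc_sum)
  also have "\<dots> \<le> (\<Sum>h\<in>?H. (1 - e/2) * (hist_prob 2 e g (two_phase_loss T) h * wsu_pi 2 e g (two_phase_loss T) h 1))"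
    using Suc.prems by (intro sum_mono step_ineq[OF e g eg]) auto
  also have "\<dots> = (1 - e/2) * expected_pi 2 e g (two_phase_loss T) (Suc n) 1"
    unfolding expected_pi_def by (simp add: sum_distrib_left)
  also have "\<dots> \<le> (1 - e/2) * ((1/2) * (1 - e/2) ^ n)"
    using Suc e eg g by (intro mult_left_mono) (auto simp: field_simps)
  finally show ?case by simp
qed

lemma ev_ln: "eventually (\<lambda>x::real. ln x \<le> x powr (1/3) / 800) at_top"
  by real_asymp

lemma final_real:
  fixes e x :: real and n :: nat
  assumes x: "x \<ge> 1" and lnx: "ln x \<le> x powr (1/3) / 800"
    and e: "0 < e" "e < 1/2" "e \<ge> x powr (-2/3)" and n: "real n \<ge> x / 400"
  shows "(1 - e/2) ^ n \<le> 1 / x"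
proof -
  have xp: "(x / 400) * (x powr (-2/3)) = x powr (1/3) / 400"
  proof -
    have "x * x powr (-2/3) = x powr 1 * x powr (-2/3)" using x by simp
    also have "\<dots> = x powr (1 + (-2/3))" by (rule powr_add[symmetric])
    also have "(1::real) + (-2/3) = 1/3" by simp
    finally show ?thesis by simp
  qed
  have "(1 - e/2) ^ n \<le> exp (-e/2) ^ n"
    using e by (intro power_mono) (auto simp: exp_ge_add_one_self[of "-e/2", simplified])
  also have "\<dots> = exp (real n * (-e/2))" by (simp only: exp_of_nat_mult)
  also have "\<dots> \<le> exp (- (x / 400) * (x powr (-2/3)) / 2)"
  proof -
    have "(x / 400) * (x powr (-2/3)) \<le> real n * e"
      using n e x by (intro mult_mono) auto
    then show ?thesis by simp
  qed
  also have "exp (- (x / 400) * (x powr (-2/3)) / 2) \<le> exp (- ln x)"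
    using lnx unfolding mult_minus_left xp by simp
  also have "\<dots> = 1 / x" using x by (simp add: exp_minus inverse_eq_divide)
  finally show ?thesis .
qed

theorem mainTheorem13:
  fixes eta gamma :: "nat \<Rightarrow> real"
  assumes "\<And>T. T \<ge> 1 \<Longrightarrow> 100 dvd T \<Longrightarrow>
             valid_pair 2 (eta T) (gamma T) \<and> nontrivial_regime T (eta T) (gamma T)"
  shows "\<exists>T0. \<forall>T. T \<ge> T0 \<longrightarrow> T \<ge> 1 \<longrightarrow> 100 dvd T \<longrightarrow>
           (\<forall>t. real (T div 100) / 2 \<le> real t \<and> t \<le> T div 100 \<longrightarrow>
              expected_pi 2 (eta T) (gamma T) (two_phase_loss T) t 1 \<le> 1 / (2 * real T))"
proof -
  obtain N :: real where N: "\<And>x::real. x \<ge> N \<Longrightarrow> ln x \<le> x powr (1/3) / 800"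
    using ev_ln unfolding eventually_at_top_linorder by blast
  show ?thesis
  proof (intro exI[of _ "max 400 (nat \<lceil>N\<rceil>)"] allI impI, elim conjE)
    fix T t :: nat
    assume T0: "max 400 (nat \<lceil>N\<rceil>) \<le> T" and T1: "1 \<le> T" and dv: "100 dvd T"
      and t1: "real (T div 100) / 2 \<le> real t" and t2: "t \<le> T div 100"
    define e where "e = eta T"
    define g where "g = gamma T"
    have vp: "valid_pair 2 e g" "nontrivial_regime T e g"
      using assms[OF T1 dv] by (auto simp: e_def g_def)
    have e: "0 < e" "e < 1/2" and g: "0 < g" "g < 1/2" and eg: "e * 2 / g \<le> 1/2"
      using vp(1) by (auto simp: valid_pair_def)
    have ep: "e \<ge> real T powr (-2/3)" using vp(2) by (simp add: nontrivial_regime_def)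
    have T400: "real T \<ge> 400" using T0 by simp
    have TN: "real T \<ge> N" using T0 by linarith
    have d: "real (T div 100) = real T / 100" using dv by (simp add: real_of_nat_div)
    have tge: "real t \<ge> real T / 200" using t1 d by simp
    then have tpos: "t \<ge> 1" using T400 by (cases t) auto
    define n where "n = t - 1"
    have tn: "t = Suc n" using tpos by (simp add: n_def)
    have nge: "real n \<ge> real T / 400" using tge T400 tpos by (simp add: n_def of_nat_diff)
    have "expected_pi 2 e g (two_phase_loss T) t 1 \<le> (1/2) * (1 - e/2) ^ n"
      unfolding tn using S_bound[OF e(1) g eg, of n T] t2 tn by simp
    also have "\<dots> \<le> (1/2) * (1 / real T)"
      using final_real[of "real T" e n] T400 N[OF TN] e ep nge by simp
    finally show "expected_pi 2 (eta T) (gamma T) (two_phase_loss T) t 1 \<le> 1 / (2 * real T)"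
      by (simp add: e_def g_def)
  qed
qed

end
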